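(* Let $D=2$, $0<p\le1$, and $\kappa(\theta,\theta')=\varphi(\|\theta-\theta'\|_p^p)$ with $\varphi(x)=\frac1{1+x}$. For $\Delta>0$ let $\mathcal G_\Delta=\{0,\Delta\}\times\{0,\Delta\}\subset\mathbb R^2$. Then there exists $\Delta>0$ such that $\mathcal G_\Delta$ is not axis admissible with respect to $\kappa$.
   Context: $\|\theta\|_p^p=\sum_d|\theta[d]|^p$. A Cartesian grid is $\mathcal G=\prod_{d=1}^D\mathcal S_d$ with $\mathcal S_d\subset\mathbb R$ finite. $\mathcal G=\{\theta_\ell\}_{\ell=1}^{|\mathcal G|}$ is axis admissible w.r.t. $\kappa$ if for every $d\in\{1,\dots,D\}$, every $\theta\in\mathbb R^D$ with $\theta[d]=0$ and every real coefficients $\{c_\ell\}$ such that $f_d(t)=|\sum_\ell c_\ell\kappa(\theta+t\mathbf e_d,\theta_\ell)|$ is not identically zero on $\mathbb R$, one has $\emptyset\ne\arg\max_{t\in\mathbb R}f_d(t)\subseteq\mathcal S_d$ ($\mathbf e_d$ the $d$-th canonical basis vector). *)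

theory Defs
  imports "HOL-Analysis.Analysis"
begin

definition pnorm_pow :: "real \<Rightarrow> real^'n \<Rightarrow> real" where
  "pnorm_pow p \<theta> = (\<Sum>d\<in>UNIV. \<bar>\<theta> $ d\<bar> powr p)"

definition cart_grid :: "('n \<Rightarrow> real set) \<Rightarrow> (real^'n) set" where
  "cart_grid S = {\<theta>. \<forall>d. \<theta> $ d \<in> S d}"

definition axis_admissible ::
  "(real^'n \<Rightarrow> real^'n \<Rightarrow> real) \<Rightarrow> ('n \<Rightarrow> real set) \<Rightarrow> bool" where
  "axis_admissible \<kappa> S \<longleftrightarrow>
     (\<forall>d. \<forall>\<theta>::real^'n. \<theta> $ d = 0 \<longrightarrow>
        (\<forall>c :: real^'n \<Rightarrow> real.
           let f = (\<lambda>t::real. \<bar>\<Sum>l\<in>cart_grid S. c l * \<kappa> (\<theta> + t *\<^sub>R axis d 1) l\<bar>)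
           in (\<exists>t. f t \<noteq> 0) \<longrightarrow>
              ({t. \<forall>s. f s \<le> f t} \<noteq> {} \<and> {t. \<forall>s. f s \<le> f t} \<subseteq> S d)))"

definition kappa_p :: "real \<Rightarrow> real^'n \<Rightarrow> real^'n \<Rightarrow> real" where
  "kappa_p p \<theta> \<theta>' = 1 / (1 + pnorm_pow p (\<theta> - \<theta>'))"

end

theory Submission
  imports Defs
begin

lemma grid_finite: "finite (cart_grid (\<lambda>_::2. {0, 1::real}))"
proof -
  have "cart_grid (\<lambda>_::2. {0, 1::real}) \<subseteq>
        (\<lambda>(a,b). \<chi> i::2. if i = 1 then a else b) ` ({0,1::real} \<times> {0,1::real})"
  proof
    fix x assume x: "x \<in> cart_grid (\<lambda>_::2. {0, 1::real})"
    have "x = (\<lambda>(a,b). \<chi> i::2. if i = 1 then a else b) (x$1, x$2)"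
      by (simp add: vec_eq_iff forall_2)
    moreover have "x$1 \<in> {0,1::real}" "x$2 \<in> {0,1::real}"
      using x by (simp_all only: cart_grid_def mem_Collect_eq)
    then have "(x$1, x$2) \<in> {0,1::real} \<times> {0,1::real}" by blast
    ultimately show "x \<in> (\<lambda>(a,b). \<chi> i::2. if i = 1 then a else b) ` ({0,1::real} \<times> {0,1::real})"
      by blast
  qed
  then show ?thesis by (rule finite_subset) simp
qed

theorem mainTheorem17:
  fixes p :: real
  assumes "0 < p" and "p \<le> 1"
  shows "\<exists>\<Delta>>0. \<not> axis_admissible (kappa_p p :: real^2 \<Rightarrow> real^2 \<Rightarrow> real) (\<lambda>_. {0, \<Delta>})"
proof (intro exI[of _ 1] conjI)
  show "(0::real) < 1" by simp
  define G where "G = cart_grid (\<lambda>_::2. {0, 1::real})"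
  define Q :: "real^2" where "Q = axis 2 1"
  define \<theta> :: "real^2" where "\<theta> = axis 2 1"
  define c :: "real^2 \<Rightarrow> real" where "c l = (if l = 0 then 1 else if l = Q then -1/2 else 0)" for l
  define f where "f = (\<lambda>t::real. \<bar>\<Sum>l\<in>G. c l * kappa_p p (\<theta> + t *\<^sub>R axis 1 1) l\<bar>)"
  have Q0: "Q \<noteq> 0" by (simp add: Q_def vec_eq_iff axis_def)
  have sub: "{0, Q} \<subseteq> G"
    by (auto simp: G_def Q_def cart_grid_def axis_def)
  have fin: "finite G" using grid_finite by (simp add: G_def)
  have sumeq: "(\<Sum>l\<in>G. c l * g l) = g 0 - g Q / 2" for g :: "real^2 \<Rightarrow> real"
  proof -
    have "(\<Sum>l\<in>G. c l * g l) = (\<Sum>l\<in>{0,Q}. c l * g l)"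
      by (rule sum.mono_neutral_right[OF fin sub]) (auto simp: c_def)
    also have "\<dots> = g 0 - g Q / 2" using Q0 by (simp add: c_def)
    finally show ?thesis .
  qed
  have k1: "kappa_p p (\<theta> + t *\<^sub>R axis 1 1) 0 = 1 / (2 + \<bar>t\<bar> powr p)" for t
    by (simp add: kappa_p_def pnorm_pow_def sum_2 \<theta>_def axis_def)
  have k2: "kappa_p p (\<theta> + t *\<^sub>R axis 1 1) Q = 1 / (1 + \<bar>t\<bar> powr p)" for t
    using assms(1) by (simp add: kappa_p_def pnorm_pow_def sum_2 \<theta>_def Q_def axis_def)
  have fF: "f t = \<bar>1 / (2 + \<bar>t\<bar> powr p) - 1 / (1 + \<bar>t\<bar> powr p) / 2\<bar>" for t
    by (simp add: f_def sumeq k1 k2)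
  have f0: "f 0 = 0" using assms(1) by (simp add: fF)
  have f1: "f 1 = 1/12" by (simp add: fF)
  have fm: "f (-t) = f t" for t by (simp add: fF)
  show "\<not> axis_admissible (kappa_p p :: real^2 \<Rightarrow> real^2 \<Rightarrow> real) (\<lambda>_. {0, 1})"
  proof
    assume A: "axis_admissible (kappa_p p :: real^2 \<Rightarrow> real^2 \<Rightarrow> real) (\<lambda>_. {0, 1})"
    have th1: "\<theta> $ 1 = 0" by (simp add: \<theta>_def axis_def)
    have "{t. \<forall>s. f s \<le> f t} \<noteq> {} \<and> {t. \<forall>s. f s \<le> f t} \<subseteq> {0, 1}"
    proof -
      have "(\<exists>t. f t \<noteq> 0) \<longrightarrow> ({t. \<forall>s. f s \<le> f t} \<noteq> {} \<and> {t. \<forall>s. f s \<le> f t} \<subseteq> {0, 1})"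
        using A unfolding axis_admissible_def f_def G_def Let_def using th1 by blast
      moreover have "\<exists>t. f t \<noteq> 0" using f1 by (intro exI[of _ 1]) simp
      ultimately show ?thesis by blast
    qed
    then obtain t where t: "\<forall>s. f s \<le> f t" and tin: "t \<in> {0,1}"
      by blast
    show False
    proof (cases "t = 0")
      case True then show ?thesis using t[rule_format, of 1] f0 f1 by simp
    next
      case False
      then have "t = 1" using tin by simp
      then have "-1 \<in> {t. \<forall>s. f s \<le> f t}" using t fm[of 1] by simp
      then show ?thesis using \<open>{t. \<forall>s. f s \<le> f t} \<noteq> {} \<and> _\<close> by auto
    qed
  qed
qed

end
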